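(* Let $1\le i,j\le d$ with $i\ne j$ and $m,n\in\mathbb Z_{<0}$. Then the vertex operator of $v^{ij}(m,n)\mathbf 1\in V_{\mathcal J}=M_r$ is $$Y(v^{ij}(m,n)\mathbf 1,z)=(-1)^{-m-n}\sum_{l\in\mathbb Z}\Big\{\sum_{k\in\mathbb Z}\binom{l+n-k}{-m-1}\binom{k-n-1}{-n-1}v^{ij}(l+m+n+1-k,k)\Big\}z^{-l-1}.$$
   Context: Fix an integer $d\ge 2$ and $r\in\mathbb{C}$. Let $\hat{\mathfrak h}$ be the complex Lie algebra with basis $\{v^i(m)\mid 1\le i\le d,\ m\in\mathbb{Z}\}\cup\{\mathbf c\}$ and bracket $[v^i(m),v^j(n)]=\delta_{m+n,0}\delta_{i,j}\,m\,\mathbf c$, $[\mathbf c,\hat{\mathfrak h}]=0$. In $A=U(\hat{\mathfrak h})/\langle \mathbf c-1\rangle$ let $v^{ij}(m,n)$ be the image of $v^i(m)v^j(n)$; then $v^{ij}(m,n)=v^{ji}(n,m)$ unless $i=j$ and $m=-n$, and $v^{ii}(m,-m)=v^{ii}(-m,m)+m$. Let $\mathcal B=\{v^{ii}(m,n)\mid 1\le i\le d,\ m\le n\}\cup\{v^{ij}(m,n)\mid 1\le i<j\le d,\ m,n\in\mathbb Z\}$; then $\mathcal B\cup\{1\}$ is linearly independent, $\mathcal L:=\mathrm{span}_{\mathbb C}\mathcal B\oplus\mathbb C\subset A$ contains every $v^{ij}(m,n)$ and is closed under $[x,y]=xy-yx$. With $\pi_1,\pi_2$ the projections of $\mathcal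 L$ onto $\mathrm{span}\,\mathcal B$ and onto $\mathbb C$, $[x,y]_r=\pi_1([x,y])+r\pi_2([x,y])$ is a Lie bracket on $\mathcal L$; call this Lie algebra $\mathcal L_r$. Let $\mathcal B_+=\{v^{ij}(m,n)\in\mathcal B\mid m\ge 0\text{ or }n\ge 0\}$, $\mathcal B_-=\{v^{ij}(m,n)\in\mathcal B\mid m,n<0\}$, $\mathcal L_r^+=\mathrm{span}\,\mathcal B_+\oplus\mathbb C$, and $M_r=U(\mathcal L_r)\otimes_{U(\mathcal L_r^+)}\mathbb C\mathbf 1$, where $\mathcal B_+$ acts by $0$ on $\mathbf 1$ and $s\in\mathbb C\subset\mathcal L_r$ acts by the scalar $s$; $M_r$ is graded by giving $x_p\cdots x_1\mathbf 1$ with $x_q=v^{i_qj_q}(m_q,n_q)\in\mathcal B_-$ degree $-\sum_q(m_q+n_q)$. Define operators on $M_r$: $L_r^{ij}(m)=\frac12\sum_{h\in\mathbb Z}v^{ij}(m-h,h)$ if $i\ne j$ or $m\ne0$, and $L_r^{ii}(0)=\frac12 v^{ii}(0,0)+\sum_{h>0}v^{ii}(-h,h)$. Let $\omega_r^{ij}=L_r^{ij}(-2)\mathbf 1$, $\omega=\sum_i\omega_r^{ii}$, and $V_{\mathcal J}\subset M_r$ the span of all $L_r^{i_1j_1}(m_1)\cdots L_r^{i_pj_p}(m_p)\mathbf 1$; it is known that $V_{\mathcal J}=M_r$. By a theorem of Ashihara–Miyamoto, there is a unique linear map $Y(\cdot,z):V_{\mathcal J}\to\mathrm{End}(V_{\mathcal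 J})[[z,z^{-1}]]$ with $Y(\omega_r^{ij},z)=\sum_m L_r^{ij}(m)z^{-m-2}$ and $Y(\mathbf 1,z)=\mathrm{Id}$ making $(V_{\mathcal J},Y,\mathbf 1,\omega)$ a vertex operator algebra of central charge $dr$. Binomial coefficients are $\binom{a}{b}=a(a-1)\cdots(a-b+1)/b!$ for $a\in\mathbb Z$, $b\in\mathbb Z_{\ge0}$. The inner sums act on $M_r$ as operators (only finitely many terms are nonzero on each vector). *)

theory Defs
  imports Complex_Main "HOL-Library.Multiset" "HOL-Library.Product_Lexorder"
    "HOL-Library.Groups_Big_Fun"
begin

(* A generator (i,j,m,n) stands for v^{ij}(m,n). *)
type_synonym gen = "nat \<times> nat \<times> int \<times> int"

definition in_range :: "nat \<Rightarrow> gen \<Rightarrow> bool" where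
  "in_range d g = (case g of (i,j,m,n) \<Rightarrow> 1 \<le> i \<and> i \<le> d \<and> 1 \<le> j \<and> j \<le> d)"

definition inB :: "nat \<Rightarrow> gen \<Rightarrow> bool" where
  "inB d g = (in_range d g \<and> (case g of (i,j,m,n) \<Rightarrow> i < j \<or> (i = j \<and> m \<le> n)))"

definition inBminus :: "nat \<Rightarrow> gen \<Rightarrow> bool" where
  "inBminus d g = (inB d g \<and> (case g of (i,j,m,n) \<Rightarrow> m < 0 \<and> n < 0))"

definition inBplus :: "nat \<Rightarrow> gen \<Rightarrow> bool" where
  "inBplus d g = (inB d g \<and> (case g of (i,j,m,n) \<Rightarrow> m \<ge> 0 \<or> n \<ge> 0))"

(* pi_2 (constant part) of the element v^{ij}(m,n) of L written in the basis B + C *)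
definition cst :: "gen \<Rightarrow> complex" where
  "cst g = (case g of (i,j,m,n) \<Rightarrow> if i = j \<and> n < m \<and> m = - n then of_int m else 0)"

(* [v^{ij}(m,n), v^{kl}(p,q)] computed in A, as a list of (coefficient, v^{ab}(s,t)) *)
definition brk_terms :: "gen \<Rightarrow> gen \<Rightarrow> (complex \<times> gen) list" where
  "brk_terms x y = (case x of (i,j,m,n) \<Rightarrow> case y of (k,l,p,q) \<Rightarrow>
     [ (if j = k \<and> n + p = 0 then of_int n else 0, (i,l,m,q)),
       (if j = l \<and> n + q = 0 then of_int n else 0, (i,k,m,p)),
       (if i = k \<and> m + p = 0 then of_int m else 0, (l,j,q,n)),
       (if i = l \<and> m + q = 0 then of_int m else 0, (k,j,p,n)) ])"

(* PBW monomial x_p ... x_1 1 attached to a multiset of generators *)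
definition pbw_mono :: "(gen \<Rightarrow> 'v \<Rightarrow> 'v) \<Rightarrow> 'v \<Rightarrow> gen multiset \<Rightarrow> 'v" where
  "pbw_mono act one S = foldr act (sorted_list_of_multiset S) one"

(* (V, sc, act, one) is (isomorphic to) the induced module M_r:
   act g is the action of v^{ij}(m,n) (for every tuple, B-element or not),
   the constants s of L_r act by the scalar s, the bracket is [ , ]_r,
   B_+ kills one, and the PBW monomials in B_- form a basis. *)
definition Mr_module ::
  "nat \<Rightarrow> complex \<Rightarrow> (complex \<Rightarrow> 'v::ab_group_add \<Rightarrow> 'v) \<Rightarrow> (gen \<Rightarrow> 'v \<Rightarrow> 'v) \<Rightarrow> 'v \<Rightarrow> bool" where
  "Mr_module d r sc act one =
    (vector_space sc \<and>
     (\<forall>g. in_range d g \<longrightarrow> Vector_Spaces.linear sc sc (act g)) \<and>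
     (\<forall>i j m n. in_range d (i,j,m,n) \<and> \<not> (i = j \<and> m = - n) \<longrightarrow> act (i,j,m,n) = act (j,i,n,m)) \<and>
     (\<forall>i m v. 1 \<le> i \<and> i \<le> d \<longrightarrow> act (i,i,m,-m) v = act (i,i,-m,m) v + sc (of_int m) v) \<and>
     (\<forall>x y v. in_range d x \<and> in_range d y \<longrightarrow>
        act x (act y v) - act y (act x v) =
          (\<Sum>(c,g)\<leftarrow>brk_terms x y. sc c (act g v))
          + sc ((r - 1) * (\<Sum>(c,g)\<leftarrow>brk_terms x y. c * cst g)) v) \<and>
     (\<forall>x. inBplus d x \<longrightarrow> act x one = 0) \<and>
     (let M = {S. \<forall>g\<in>set_mset S. inBminus d g} in
        inj_on (pbw_mono act one) M \<and>
        \<not> module.dependent sc (pbw_mono act one ` M) \<and>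
        module.span sc (pbw_mono act one ` M) = UNIV))"

(* the operators L_r^{ij}(m); inner sums are finite sums of the nonzero terms *)
definition Lop :: "(complex \<Rightarrow> 'v::ab_group_add \<Rightarrow> 'v) \<Rightarrow> (gen \<Rightarrow> 'v \<Rightarrow> 'v)
    \<Rightarrow> nat \<Rightarrow> nat \<Rightarrow> int \<Rightarrow> 'v \<Rightarrow> 'v" where
  "Lop sc act i j m v =
    (if i \<noteq> j \<or> m \<noteq> 0 then sc (1/2) (Sum_any (\<lambda>h. act (i,j,m-h,h) v))
     else sc (1/2) (act (i,i,0,0) v) + Sum_any (\<lambda>h. if h > 0 then act (i,i,-h,h) v else 0))"

(* Vertex operator algebra (FLM); Y a n b = a_(n) b, i.e. Y(a,z) = sum_n a_(n) z^{-n-1} *)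
definition is_VOA ::
  "(complex \<Rightarrow> 'v::ab_group_add \<Rightarrow> 'v) \<Rightarrow> ('v \<Rightarrow> int \<Rightarrow> 'v \<Rightarrow> 'v) \<Rightarrow> 'v \<Rightarrow> 'v \<Rightarrow> complex \<Rightarrow> bool" where
  "is_VOA sc Y one omega c =
    (vector_space sc \<and>
     (\<forall>a n. Vector_Spaces.linear sc sc (Y a n)) \<and>
     (\<forall>n b. Vector_Spaces.linear sc sc (\<lambda>a. Y a n b)) \<and>
     (\<forall>a b. \<exists>N. \<forall>n\<ge>N. Y a n b = 0) \<and>
     (\<forall>n b. Y one n b = (if n = -1 then b else 0)) \<and>
     (\<forall>a n. n \<ge> 0 \<longrightarrow> Y a n one = 0) \<and>
     (\<forall>a. Y a (-1) one = a) \<and>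
     (\<forall>a b e p q s.
        Sum_any (\<lambda>i::nat. sc ((of_int p :: complex) gchoose i) (Y (Y a (s + int i) b) (p + q - int i) e))
        = Sum_any (\<lambda>i::nat. sc ((-1) ^ i * ((of_int s :: complex) gchoose i))
             (Y a (p + s - int i) (Y b (q + int i) e)
              - sc ((-1) powi s) (Y b (q + s - int i) (Y a (p + int i) e))))) \<and>
     (\<forall>m n v. Y omega (m + 1) (Y omega (n + 1) v) - Y omega (n + 1) (Y omega (m + 1) v)
        = sc (of_int (m - n)) (Y omega (m + n + 1) v)
          + (if m + n = 0 then sc (of_int (m^3 - m) / 12 * c) v else 0)) \<and>
     (\<forall>a n b. Y (Y omega 0 a) n b = sc (- of_int n) (Y a (n - 1) b)) \<and>
     (let Vn = (\<lambda>n::int. {v. Y omega 1 v = sc (of_int n) v}) in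
        module.span sc (\<Union>n. Vn n) = UNIV \<and>
        (\<forall>n. \<exists>F. finite F \<and> Vn n \<subseteq> module.span sc F) \<and>
        (\<exists>N. \<forall>n<N. Vn n = {0})))"

end

theory Submission
  imports Defs
begin

lemma SA_int:
  fixes f :: "int \<Rightarrow> 'a::comm_monoid_add"
  assumes "\<And>k. k < lo \<or> hi < k \<Longrightarrow> f k = 0"
  shows "Sum_any f = sum f {lo..hi}"
proof (rule Sum_any.expand_superset)
  show "finite {lo..hi}" by simp
  show "{a. f a \<noteq> 0} \<subseteq> {lo..hi}" using assms by force
qed

lemma sum_shift1:
  fixes g :: "int \<Rightarrow> 'a::comm_monoid_add"
  shows "sum g {a..b} = sum (\<lambda>k. g (k+1)) {a-1..b-1}"
proof -
  have "(\<lambda>k. k+1) ` {a-1..b-1} = {a..b}"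
    by (auto simp: image_iff intro!: bexI[of _ "x - 1" for x])
  moreover have "inj_on (\<lambda>k::int. k+1) {a-1..b-1}" by (auto simp: inj_on_def)
  ultimately show ?thesis using sum.reindex[of "\<lambda>k::int. k+1" "{a-1..b-1}" g]
    by (simp add: o_def)
qed

lemma coef_m:
  fixes l m n k :: int
  assumes "m < 0" "n < 0"
  shows "(- 1 / of_int m) * ((-1) ^ nat (- m - n) * (((of_int (l + n - k) :: complex) gchoose nat (- m - 1))
          * ((of_int (k - n - 1) :: complex) gchoose nat (- n - 1)) * (- of_int (l + m + n + 1 - k))))
       = (-1) ^ nat (- (m - 1) - n) * (((of_int (l + n - k) :: complex) gchoose nat (- (m - 1) - 1))
          * ((of_int (k - n - 1) :: complex) gchoose nat (- n - 1)))"
proof -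
  define a where "a = nat (- m - 1)"
  define t where "t = nat (- m - n)"
  define X where "X = (of_int (l + n - k) :: complex)"
  define B where "B = ((of_int (k - n - 1) :: complex) gchoose nat (- n - 1))"
  have a1: "nat (- (m - 1) - 1) = Suc a" using assms unfolding a_def by simp
  have t1: "nat (- (m - 1) - n) = Suc t" using assms unfolding t_def by simp
  have am: "(of_nat a :: complex) = - of_int m - 1" using assms unfolding a_def
    by (simp add: of_nat_nat)
  have P: "(of_int (l + m + n + 1 - k) :: complex) = X - of_nat a" unfolding X_def am by simp
  have key: "(X - of_nat a) * (X gchoose a) = of_nat (Suc a) * (X gchoose Suc a)"
    using gbinomial_mult_1[of X a] by (simp add: algebra_simps)
  have sa: "(of_nat (Suc a) :: complex) = - of_int m" using am by simp
  have m0: "(of_int m :: complex) \<noteq> 0" using assms by simp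
  have "(- 1 / of_int m) * ((-1) ^ t * ((X gchoose a) * B * (- (X - of_nat a))))
      = (-1) ^ Suc t * ((X gchoose Suc a) * B)"
  proof -
    have "(- 1 / of_int m) * ((-1) ^ t * ((X gchoose a) * B * (- (X - of_nat a))))
       = (1 / of_int m) * (-1) ^ t * B * ((X - of_nat a) * (X gchoose a))" by (simp add: algebra_simps)
    also have "\<dots> = (1 / of_int m) * (-1) ^ t * B * (- of_int m * (X gchoose Suc a))"
      unfolding key sa ..
    also have "\<dots> = (-1) ^ Suc t * ((X gchoose Suc a) * B)" using m0 by (simp add: field_simps)
    finally show ?thesis .
  qed
  then show ?thesis unfolding a1 t1 P unfolding a_def t_def X_def B_def .
qed

lemma coef_n:
  fixes l m n k :: int
  assumes "m < 0" "n < 0"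
  shows "(- 1 / of_int n) * ((-1) ^ nat (- m - n) * (((of_int (l + n - (k + 1)) :: complex) gchoose nat (- m - 1))
          * ((of_int (k + 1 - n - 1) :: complex) gchoose nat (- n - 1)) * (- of_int (k + 1))))
       = (-1) ^ nat (- m - (n - 1)) * (((of_int (l + (n - 1) - k) :: complex) gchoose nat (- m - 1))
          * ((of_int (k - (n - 1) - 1) :: complex) gchoose nat (- (n - 1) - 1)))"
proof -
  define b where "b = nat (- n - 1)"
  define t where "t = nat (- m - n)"
  define X where "X = (of_int (k - n) :: complex)"
  define C where "C = ((of_int (l + n - (k + 1)) :: complex) gchoose nat (- m - 1))"
  have b1: "nat (- (n - 1) - 1) = Suc b" using assms unfolding b_def by simp
  have t1: "nat (- m - (n - 1)) = Suc t" using assms unfolding t_def by simp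
  have bn: "(of_nat b :: complex) = - of_int n - 1" using assms unfolding b_def
    by (simp add: of_nat_nat)
  have P: "(of_int (k + 1) :: complex) = X - of_nat b" unfolding X_def bn by simp
  have e1: "l + (n - 1) - k = l + n - (k + 1)" "k + 1 - n - 1 = k - n" "k - (n - 1) - 1 = k - n" by simp_all
  have key: "(X - of_nat b) * (X gchoose b) = of_nat (Suc b) * (X gchoose Suc b)"
    using gbinomial_mult_1[of X b] by (simp add: algebra_simps)
  have sb: "(of_nat (Suc b) :: complex) = - of_int n" using bn by simp
  have n0: "(of_int n :: complex) \<noteq> 0" using assms by simp
  have "(- 1 / of_int n) * ((-1) ^ t * (C * (X gchoose b) * (- (X - of_nat b))))
      = (-1) ^ Suc t * (C * (X gchoose Suc b))"
  proof -
    have "(- 1 / of_int n) * ((-1) ^ t * (C * (X gchoose b) * (- (X - of_nat b))))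
       = (1 / of_int n) * (-1) ^ t * C * ((X - of_nat b) * (X gchoose b))" by (simp add: algebra_simps)
    also have "\<dots> = (1 / of_int n) * (-1) ^ t * C * (- of_int n * (X gchoose Suc b))"
      unfolding key sb ..
    also have "\<dots> = (-1) ^ Suc t * (C * (X gchoose Suc b))" using n0 by (simp add: field_simps)
    finally show ?thesis .
  qed
  then show ?thesis unfolding b1 t1 P e1 unfolding b_def t_def X_def C_def .
qed

locale VS =
  fixes d :: nat and r :: complex
    and sc :: "complex \<Rightarrow> 'v::ab_group_add \<Rightarrow> 'v"
    and act :: "gen \<Rightarrow> 'v \<Rightarrow> 'v" and one :: 'v
    and Y :: "'v \<Rightarrow> int \<Rightarrow> 'v \<Rightarrow> 'v"
  assumes MR: "Mr_module d r sc act one"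
    and VOA: "is_VOA sc Y one (\<Sum>k = 1..d. Lop sc act k k (-2) one) (of_nat d * r)"
    and H4: "\<forall>a b p. 1 \<le> a \<and> a \<le> d \<and> 1 \<le> b \<and> b \<le> d \<longrightarrow>
           Y (Lop sc act a b (-2) one) (p + 1) = Lop sc act a b p"
begin

sublocale V: vector_space sc using MR unfolding Mr_module_def by auto

lemma act_hom: "in_range d g \<Longrightarrow> module_hom sc sc (act g)"
  using MR unfolding Mr_module_def linear_iff_module_hom by (cases g) auto

lemma act_add: "in_range d g \<Longrightarrow> act g (x + y) = act g x + act g y"
  using module_hom.add[OF act_hom] .
lemma act_scale: "in_range d g \<Longrightarrow> act g (sc c x) = sc c (act g x)"
  using module_hom.scale[OF act_hom] .
lemma act_zero: "in_range d g \<Longrightarrow> act g 0 = 0"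
  using module_hom.zero[OF act_hom] .
lemma act_diff: "in_range d g \<Longrightarrow> act g (x - y) = act g x - act g y"
  using module_hom.diff[OF act_hom] .
lemma act_sum: "in_range d g \<Longrightarrow> act g (sum f S) = (\<Sum>a\<in>S. act g (f a))"
  using module_hom.sum[OF act_hom] .

lemma act_sym: "in_range d (i,j,m,n) \<Longrightarrow> \<not> (i = j \<and> m = - n) \<Longrightarrow> act (i,j,m,n) = act (j,i,n,m)"
  using MR unfolding Mr_module_def by blast

lemma act_brk: "in_range d x \<Longrightarrow> in_range d y \<Longrightarrow>
        act x (act y v) - act y (act x v) =
          (\<Sum>(c,g)\<leftarrow>brk_terms x y. sc c (act g v))
          + sc ((r - 1) * (\<Sum>(c,g)\<leftarrow>brk_terms x y. c * cst g)) v"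
  using MR unfolding Mr_module_def by blast

lemma act_kill: "inBplus d x \<Longrightarrow> act x one = 0"
  using MR unfolding Mr_module_def by blast

lemma act_span: "module.span sc (pbw_mono act one ` {S. \<forall>g\<in>set_mset S. inBminus d g}) = UNIV"
  using MR unfolding Mr_module_def Let_def by blast

lemma kill_one:
  assumes "in_range d (i,j,a,b)" "0 \<le> a \<or> 0 \<le> b" "\<not> (i = j \<and> a + b = 0)"
  shows "act (i,j,a,b) one = 0"
proof -
  consider "i < j" | "j < i" | "i = j" "a \<le> b" | "i = j" "b < a" by linarith
  then show ?thesis
  proof cases
    case 1 then show ?thesis using assms
      by (intro act_kill) (auto simp: inBplus_def inB_def in_range_def)
  next
    case 2
    then have "act (i,j,a,b) = act (j,i,b,a)" using assms by (intro act_sym) auto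
    moreover have "act (j,i,b,a) one = 0" using assms 2
      by (intro act_kill) (auto simp: inBplus_def inB_def in_range_def)
    ultimately show ?thesis by simp
  next
    case 3 then show ?thesis using assms
      by (intro act_kill) (auto simp: inBplus_def inB_def in_range_def)
  next
    case 4
    then have "act (i,j,a,b) = act (j,i,b,a)" using assms by (intro act_sym) auto
    moreover have "act (j,i,b,a) one = 0" using assms 4
      by (intro act_kill) (auto simp: inBplus_def inB_def in_range_def)
    ultimately show ?thesis by simp
  qed
qed

definition fs :: "'v \<Rightarrow> int \<Rightarrow> bool" where
  "fs w N \<longleftrightarrow> (\<forall>i j a b. in_range d (i,j,a,b) \<longrightarrow> (N < a \<or> N < b) \<longrightarrow> \<not> (i = j \<and> a + b = 0)
      \<longrightarrow> act (i,j,a,b) w = 0)"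

lemma fs_mono: assumes "fs w N" "N \<le> N'" shows "fs w N'"
  unfolding fs_def
proof (intro allI impI)
  fix i j a b assume "in_range d (i,j,a,b)" "N' < a \<or> N' < b" "\<not> (i = j \<and> a + b = 0)"
  then show "act (i,j,a,b) w = 0" using assms unfolding fs_def by force
qed

lemma fs_foldr:
  assumes N0: "0 \<le> N"
  shows "(\<forall>g\<in>set gs. in_range d g \<and> (case g of (k,l,p,q) \<Rightarrow> p < 0 \<and> q < 0 \<and> -p \<le> N \<and> -q \<le> N))
     \<Longrightarrow> fs (foldr act gs one) N"
proof (induction gs)
  case Nil
  show ?case unfolding fs_def using N0 by (auto intro!: kill_one)
next
  case (Cons g gs)
  obtain k l p q where g: "g = (k,l,p,q)" by (cases g)
  let ?u = "foldr act gs one"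
  have IH: "fs ?u N" using Cons by auto
  have gr: "in_range d (k,l,p,q)" and pq: "p<0" "q<0" "-p \<le> N" "-q \<le> N" using Cons.prems g by auto
  show ?case unfolding fs_def
  proof (intro allI impI)
    fix i j a b assume x: "in_range d (i,j,a,b)" and big: "N < a \<or> N < b" and ex: "\<not>(i=j \<and> a+b=0)"
    have ux: "act (i,j,a,b) ?u = 0" using IH x big ex unfolding fs_def by blast
    have rng: "in_range d (i,l,a,q)" "in_range d (i,k,a,p)" "in_range d (l,j,q,b)" "in_range d (k,j,p,b)"
      using x gr by (auto simp: in_range_def)
    have e: "act (i,j,a,b) (act (k,l,p,q) ?u) = act (k,l,p,q) (act (i,j,a,b) ?u) +
          ((\<Sum>(c,g)\<leftarrow>brk_terms (i,j,a,b) (k,l,p,q). sc c (act g ?u))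
          + sc ((r - 1) * (\<Sum>(c,g)\<leftarrow>brk_terms (i,j,a,b) (k,l,p,q). c * cst g)) ?u)"
      using act_brk[OF x gr, of ?u] by (simp add: algebra_simps)
    from big show "act (i,j,a,b) (foldr act (g # gs) one) = 0"
    proof
      assume "N < a"
      have z: "act (i,l,a,q) ?u = 0" "act (i,k,a,p) ?u = 0"
        using IH rng \<open>N < a\<close> pq unfolding fs_def by auto
      have "a + p \<noteq> 0" "a + q \<noteq> 0" "cst (i,l,a,q) = 0" "cst (i,k,a,p) = 0"
        using \<open>N < a\<close> pq by (auto simp: cst_def)
      then show ?thesis using e z ux act_zero[OF gr] g
        by (simp add: brk_terms_def)
    next
      assume "N < b"
      have z: "act (l,j,q,b) ?u = 0" "act (k,j,p,b) ?u = 0"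
        using IH rng \<open>N < b\<close> pq unfolding fs_def by auto
      have "b + p \<noteq> 0" "b + q \<noteq> 0" "cst (l,j,q,b) = 0" "cst (k,j,p,b) = 0"
        using \<open>N < b\<close> pq by (auto simp: cst_def)
      then show ?thesis using e z ux act_zero[OF gr] g
        by (simp add: brk_terms_def)
    qed
  qed
qed

lemma fs_pbw:
  assumes "\<forall>g\<in>set_mset S. inBminus d g"
  shows "\<exists>N\<ge>0. fs (pbw_mono act one S) N"
proof -
  define N where "N = (\<Sum>g\<in>set_mset S. \<bar>fst (snd (snd g))\<bar> + \<bar>snd (snd (snd g))\<bar>)"
  have N0: "0 \<le> N" unfolding N_def by (intro sum_nonneg) auto
  have "fs (foldr act (sorted_list_of_multiset S) one) N"
  proof (rule fs_foldr[OF N0], intro ballI)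
    fix g assume "g \<in> set (sorted_list_of_multiset S)"
    then have gS: "g \<in> set_mset S" by simp
    obtain k l p q where g: "g = (k,l,p,q)" by (cases g)
    have le: "\<bar>p\<bar> + \<bar>q\<bar> \<le> N" unfolding N_def
      using member_le_sum[of g "set_mset S" "\<lambda>g. \<bar>fst (snd (snd g))\<bar> + \<bar>snd (snd (snd g))\<bar>"] gS g
      by simp
    show "in_range d g \<and> (case g of (k,l,p,q) \<Rightarrow> p < 0 \<and> q < 0 \<and> -p \<le> N \<and> -q \<le> N)"
      using assms gS g le by (auto simp: inBminus_def inB_def)
  qed
  then show ?thesis using N0 unfolding pbw_mono_def by blast
qed

lemma fs_all: "\<exists>N\<ge>0. fs w N"
proof -
  have "w \<in> V.span (pbw_mono act one ` {S. \<forall>g\<in>set_mset S. inBminus d g})" using act_span by simp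
  then show ?thesis
  proof (induction rule: V.span_induct)
    case base
    show ?case
    proof (rule V.subspaceI)
      show "0 \<in> Collect (\<lambda>w. \<exists>N\<ge>0. fs w N)"
        by (auto simp: fs_def act_zero intro!: exI[of _ 0])
    next
      fix x y assume "x \<in> Collect (\<lambda>w. \<exists>N\<ge>0. fs w N)" "y \<in> Collect (\<lambda>w. \<exists>N\<ge>0. fs w N)"
      then obtain N1 N2 where "0 \<le> N1" "fs x N1" "0 \<le> N2" "fs y N2" by auto
      then have "fs x (N1+N2)" "fs y (N1+N2)" by (auto intro: fs_mono)
      then have "fs (x+y) (N1+N2)" unfolding fs_def by (auto simp: act_add)
      then show "x + y \<in> Collect (\<lambda>w. \<exists>N\<ge>0. fs w N)" using \<open>0 \<le> N1\<close> \<open>0 \<le> N2\<close>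
        by (intro CollectI exI[of _ "N1+N2"]) auto
    next
      fix c x assume "x \<in> Collect (\<lambda>w. \<exists>N\<ge>0. fs w N)"
      then obtain N1 where "0 \<le> N1" "fs x N1" by auto
      then have "fs (sc c x) N1" unfolding fs_def by (auto simp: act_scale)
      then show "sc c x \<in> Collect (\<lambda>w. \<exists>N\<ge>0. fs w N)" using \<open>0 \<le> N1\<close> by auto
    qed
  next
    case (step x)
    then show ?case using fs_pbw by auto
  qed
qed

lemma in_range_simp: "in_range d (i,j,a,b) \<longleftrightarrow> 1 \<le> i \<and> i \<le> d \<and> 1 \<le> j \<and> j \<le> d"
  by (simp add: in_range_def)

lemma fs_zero: "fs w N \<Longrightarrow> in_range d (i,j,a,b) \<Longrightarrow> (N < a \<or> N < b) \<Longrightarrow> \<not> (i = j \<and> a + b = 0)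
   \<Longrightarrow> act (i,j,a,b) w = 0"
  unfolding fs_def by blast

lemma Lm1:
  assumes "1 \<le> i" "i \<le> d" "fs w N" "N < M"
  shows "Lop sc act i i (-1) w = sc (1/2) (sum (\<lambda>h. act (i,i,-1-h,h) w) {-M..M})"
proof -
  have "Sum_any (\<lambda>h. act (i,i,-1-h,h) w) = sum (\<lambda>h. act (i,i,-1-h,h) w) {-M..M}"
  proof (rule SA_int)
    fix k :: int assume "k < -M \<or> M < k"
    then have "N < -1-k \<or> N < k" using assms by auto
    then show "act (i,i,-1-k,k) w = 0" using assms by (intro fs_zero[of w N]) (auto simp: in_range_simp)
  qed
  then show ?thesis unfolding Lop_def by simp
qed

lemma half: "sc (1/2) (x + x) = x"
proof -
  have "x + x = sc 2 x" using V.scale_left_distrib[of 1 1 x] by simp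
  then show ?thesis by simp
qed

lemma comm:
  assumes ij: "1 \<le> i" "i \<le> d" "1 \<le> j" "j \<le> d" "i \<noteq> j"
  shows "Lop sc act i i (-1) (act (i,j,p,q) w) - act (i,j,p,q) (Lop sc act i i (-1) w)
     = sc (- of_int p) (act (i,j,p-1,q) w)"
proof -
  obtain N1 where N1: "0 \<le> N1" "fs w N1" using fs_all by blast
  obtain N2 where N2: "0 \<le> N2" "fs (act (i,j,p,q) w) N2" using fs_all by blast
  define M where "M = N1 + N2 + \<bar>p\<bar> + 1"
  have M: "N1 < M" "N2 < M" "-p \<in> {-M..M}" "p - 1 \<in> {-M..M}" using N1 N2 unfolding M_def by auto
  have yr: "in_range d (i,j,p,q)" using ij by (simp add: in_range_simp)
  let ?A = "act (i,j,p-1,q) w"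
  have e1: "Lop sc act i i (-1) (act (i,j,p,q) w) = sc (1/2) (sum (\<lambda>h. act (i,i,-1-h,h) (act (i,j,p,q) w)) {-M..M})"
    using Lm1[OF ij(1,2) N2(2) M(2)] .
  have e3: "act (i,j,p,q) (Lop sc act i i (-1) w) = sc (1/2) (sum (\<lambda>h. act (i,j,p,q) (act (i,i,-1-h,h) w)) {-M..M})"
    using Lm1[OF ij(1,2) N1(2) M(1)] by (simp add: act_scale[OF yr] act_sum[OF yr])
  have trm: "act (i,i,-1-h,h) (act (i,j,p,q) w) - act (i,j,p,q) (act (i,i,-1-h,h) w)
     = (if h = -p then sc (- of_int p) ?A else 0) + (if h = p - 1 then sc (- of_int p) ?A else 0)" for h
  proof -
    have xr: "in_range d (i,i,-1-h,h)" using ij by (simp add: in_range_simp)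
    have br: "act (i,i,-1-h,h) (act (i,j,p,q) w) - act (i,j,p,q) (act (i,i,-1-h,h) w)
       = sc (if h + p = 0 then of_int h else 0) (act (i,j,-1-h,q) w)
         + sc (if -1-h+p = 0 then of_int (-1-h) else 0) (act (j,i,q,h) w)"
      using act_brk[OF xr yr, of w] ij by (simp add: brk_terms_def cst_def)
    have sy: "act (j,i,q,p-1) = act (i,j,p-1,q)" using act_sym[of j i q "p-1"] ij by (auto simp: in_range_simp)
    consider "h = -p" | "h = p - 1" | "h \<noteq> -p" "h \<noteq> p - 1" by blast
    then show ?thesis
    proof cases
      case 1
      then have "-1-h+p \<noteq> 0" by presburger
      then show ?thesis using br 1 by simp
    next
      case 2
      then have "h + p \<noteq> 0" "h \<noteq> -p" by presburger+
      then show ?thesis using br 2 sy by simp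
    next
      case 3
      then have "h + p \<noteq> 0" "-1-h+p \<noteq> 0" by auto
      then show ?thesis using br 3 by simp
    qed
  qed
  have "Lop sc act i i (-1) (act (i,j,p,q) w) - act (i,j,p,q) (Lop sc act i i (-1) w)
     = sc (1/2) (sum (\<lambda>h. act (i,i,-1-h,h) (act (i,j,p,q) w) - act (i,j,p,q) (act (i,i,-1-h,h) w)) {-M..M})"
    unfolding e1 e3 by (simp add: V.scale_right_diff_distrib sum_subtractf)
  also have "\<dots> = sc (1/2) (sc (- of_int p) ?A + sc (- of_int p) ?A)"
    unfolding trm using M by (simp add: sum.distrib)
  also have "\<dots> = sc (- of_int p) ?A"
    by (rule half)
  finally show ?thesis .
qed

lemma comm2:
  assumes ij: "1 \<le> i" "i \<le> d" "1 \<le> j" "j \<le> d" "i \<noteq> j"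
  shows "Lop sc act j j (-1) (act (i,j,p,q) w) - act (i,j,p,q) (Lop sc act j j (-1) w)
     = sc (- of_int q) (act (i,j,p,q-1) w)"
proof -
  have s1: "act (i,j,p,q) = act (j,i,q,p)" using act_sym[of i j p q] ij by (auto simp: in_range_simp)
  have s2: "act (i,j,p,q-1) = act (j,i,q-1,p)" using act_sym[of i j p "q-1"] ij by (auto simp: in_range_simp)
  show ?thesis unfolding s1 s2 using comm[of j i q p w] ij by auto
qed

lemma L_one: "1 \<le> i \<Longrightarrow> i \<le> d \<Longrightarrow> Lop sc act i i (-1) one = 0"
proof -
  assume i: "1 \<le> i" "i \<le> d"
  have "act (i,i,-1-h,h) one = 0" for h :: int
    using i by (intro kill_one) (auto simp: in_range_simp)
  then show ?thesis unfolding Lop_def by simp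
qed

lemma Y_lin: "Vector_Spaces.linear sc sc (Y a n)"
  using VOA unfolding is_VOA_def by (elim conjE) blast
lemma Y_hom: "module_hom sc sc (Y a n)"
  using Y_lin linear_iff_module_hom by blast

lemma Y_lin_left: "Vector_Spaces.linear sc sc (\<lambda>a. Y a n b)"
  using VOA unfolding is_VOA_def by (elim conjE) blast
lemma Y_hom_left: "module_hom sc sc (\<lambda>a. Y a n b)"
  using Y_lin_left linear_iff_module_hom by blast

lemma borch0: "Y (Y a 0 b) q e = Y a 0 (Y b q e) - Y b q (Y a 0 e)"
proof -
  have B: "Sum_any (\<lambda>i::nat. sc ((of_int 0 :: complex) gchoose i) (Y (Y a (0 + int i) b) (0 + q - int i) e))
        = Sum_any (\<lambda>i::nat. sc ((-1) ^ i * ((of_int 0 :: complex) gchoose i))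
             (Y a (0 + 0 - int i) (Y b (q + int i) e)
              - sc ((-1) powi 0) (Y b (q + 0 - int i) (Y a (0 + int i) e))))"
    using VOA unfolding is_VOA_def by blast
  have l: "(\<lambda>i::nat. sc ((of_int 0 :: complex) gchoose i) (Y (Y a (0 + int i) b) (0 + q - int i) e))
     = (\<lambda>i. if i = 0 then Y (Y a 0 b) q e else 0)"
    by (auto simp: gbinomial_0_left)
  have r: "(\<lambda>i::nat. sc ((-1) ^ i * ((of_int 0 :: complex) gchoose i))
             (Y a (0 + 0 - int i) (Y b (q + int i) e)
              - sc ((-1) powi 0) (Y b (q + 0 - int i) (Y a (0 + int i) e))))
     = (\<lambda>i. if i = 0 then Y a 0 (Y b q e) - Y b q (Y a 0 e) else 0)"
    by (auto simp: gbinomial_0_left)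
  show ?thesis using B unfolding l r by simp
qed

lemma LY: "1 \<le> i \<Longrightarrow> i \<le> d \<Longrightarrow> Lop sc act i i (-1) = Y (Lop sc act i i (-2) one) 0"
  using H4 by (metis add.commute add.right_inverse)

lemma L_hom: "1 \<le> i \<Longrightarrow> i \<le> d \<Longrightarrow> module_hom sc sc (Lop sc act i i (-1))"
  using LY Y_hom by simp

definition Phi :: "nat \<Rightarrow> nat \<Rightarrow> int \<Rightarrow> int \<Rightarrow> bool" where
  "Phi i j m n \<longleftrightarrow> (\<forall>l w. Y (act (i,j,m,n) one) l w =
           sc ((-1) ^ nat (- m - n))
             (Sum_any (\<lambda>k. sc (((of_int (l + n - k) :: complex) gchoose nat (- m - 1))
                               * ((of_int (k - n - 1) :: complex) gchoose nat (- n - 1)))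
                              (act (i, j, l + m + n + 1 - k, k) w))))"

lemma SA_act:
  assumes ij: "1 \<le> i" "i \<le> d" "1 \<le> j" "j \<le> d" "i \<noteq> j"
    and "fs w N" "N \<le> P - lo" "N \<le> hi"
  shows "Sum_any (\<lambda>k. sc (f k) (act (i,j,P-k,k) w)) = sum (\<lambda>k. sc (f k) (act (i,j,P-k,k) w)) {lo..hi}"
proof (rule SA_int)
  fix k assume "k < lo \<or> hi < k"
  then have "N < P - k \<or> N < k" using assms by auto
  then have "act (i,j,P-k,k) w = 0" using assms by (intro fs_zero[of w N]) (auto simp: in_range_simp)
  then show "sc (f k) (act (i,j,P-k,k) w) = 0" by simp
qed

lemma Phi_base:
  assumes ij: "1 \<le> i" "i \<le> d" "1 \<le> j" "j \<le> d" "i \<noteq> j"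
  shows "Phi i j (-1) (-1)"
  unfolding Phi_def
proof (intro allI)
  fix l w
  let ?x = "act (i,j,-1,-1) one"
  have z: "act (i,j,-2-h,h) one = (if h = -1 then ?x else 0)" for h :: int
  proof -
    show "act (i,j,-2-h,h) one = (if h = -1 then ?x else 0)"
    proof (cases "h = -1")
      case False
      then have "0 \<le> -2-h \<or> 0 \<le> h" by auto
      then show ?thesis using False ij by (simp add: kill_one in_range_simp)
    qed simp
  qed
  have om: "Lop sc act i j (-2) one = sc (1/2) ?x"
    unfolding Lop_def using ij by (simp add: z)
  have x: "?x = sc 2 (Lop sc act i j (-2) one)" unfolding om by simp
  have "Y ?x l w = sc 2 (Y (Lop sc act i j (-2) one) ((l - 1) + 1) w)"
    unfolding x using module_hom.scale[OF Y_hom_left] by simp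
  also have "\<dots> = sc 2 (Lop sc act i j (l - 1) w)"
  proof -
    have h4: "Y (Lop sc act i j (-2) one) ((l-1)+1) = Lop sc act i j (l-1)" using H4 ij by blast
    show ?thesis by (simp only: h4)
  qed
  also have "\<dots> = Sum_any (\<lambda>h. act (i,j,l-1-h,h) w)" unfolding Lop_def using ij by simp
  finally show "Y ?x l w =
           sc ((-1) ^ nat (- (-1) - (-1)))
             (Sum_any (\<lambda>k. sc (((of_int (l + (-1) - k) :: complex) gchoose nat (- (-1) - 1))
                               * ((of_int (k - (-1) - 1) :: complex) gchoose nat (- (-1) - 1)))
                              (act (i, j, l + (-1) + (-1) + 1 - k, k) w)))"
    by simp
qed

lemma Phi_m:
  assumes ij: "1 \<le> i" "i \<le> d" "1 \<le> j" "j \<le> d" "i \<noteq> j"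
    and mn: "m < 0" "n < 0" and IH: "Phi i j m n"
  shows "Phi i j (m - 1) n"
  unfolding Phi_def
proof (intro allI)
  fix l w
  let ?L = "Lop sc act i i (-1)"
  let ?om = "Lop sc act i i (-2) one"
  let ?x = "act (i,j,m,n) one"
  let ?s = "(-1::complex) ^ nat (- m - n)"
  let ?c = "\<lambda>k. ((of_int (l + n - k) :: complex) gchoose nat (- m - 1))
                               * ((of_int (k - n - 1) :: complex) gchoose nat (- n - 1))"
  let ?P = "l + m + n + 1"
  have Lh: "module_hom sc sc ?L" using L_hom ij by simp
  have yr: "in_range d (i,j,m,n)" using ij by (simp add: in_range_simp)
  have Lx: "?L ?x = sc (- of_int m) (act (i,j,m-1,n) one)"
    using comm[OF ij, of m n one] L_one[OF ij(1,2)] act_zero[OF yr] by simp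
  have m0: "(of_int m :: complex) \<noteq> 0" using mn by simp
  have x': "act (i,j,m-1,n) one = sc (- 1 / of_int m) (?L ?x)"
    unfolding Lx using m0 by simp
  have Y1: "Y (act (i,j,m-1,n) one) l w = sc (- 1 / of_int m) (?L (Y ?x l w) - Y ?x l (?L w))"
    unfolding x' module_hom.scale[OF Y_hom_left] LY[OF ij(1,2)] borch0 ..
  obtain N1 where N1: "0 \<le> N1" "fs w N1" using fs_all by blast
  obtain N2 where N2: "0 \<le> N2" "fs (?L w) N2" using fs_all by blast
  define M where "M = N1 + N2 + \<bar>?P\<bar> + 2"
  have f1: "fs w (N1+N2)" "fs (?L w) (N1+N2)" using N1 N2 fs_mono by auto
  have Mb: "N1 + N2 \<le> ?P - (-M)" "N1 + N2 \<le> M" "N1 + N2 \<le> (?P - 1) - (-M)"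
    unfolding M_def using N1 N2 by auto
  have A: "Y ?x l v = sc ?s (sum (\<lambda>k. sc (?c k) (act (i,j,?P-k,k) v)) {-M..M})"
    if "fs v (N1+N2)" for v
    using IH SA_act[OF ij that Mb(1,2), of ?c] unfolding Phi_def by simp
  have B: "?L (Y ?x l w) - Y ?x l (?L w)
      = sc ?s (sum (\<lambda>k. sc (?c k) (?L (act (i,j,?P-k,k) w) - act (i,j,?P-k,k) (?L w))) {-M..M})"
    unfolding A[OF f1(1)] A[OF f1(2)] module_hom.scale[OF Lh] module_hom.sum[OF Lh]
    by (simp add: V.scale_right_diff_distrib sum_subtractf)
  also have "\<dots> = sc ?s (sum (\<lambda>k. sc (?c k) (sc (- of_int (?P - k)) (act (i,j,?P-k-1,k) w))) {-M..M})"
    unfolding comm[OF ij] ..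
  finally have B2: "?L (Y ?x l w) - Y ?x l (?L w) = \<dots>" .
  have T: "Sum_any (\<lambda>k. sc (((of_int (l + n - k) :: complex) gchoose nat (- (m - 1) - 1))
                               * ((of_int (k - n - 1) :: complex) gchoose nat (- n - 1)))
                              (act (i, j, l + (m - 1) + n + 1 - k, k) w))
     = sum (\<lambda>k. sc (((of_int (l + n - k) :: complex) gchoose nat (- (m - 1) - 1))
                               * ((of_int (k - n - 1) :: complex) gchoose nat (- n - 1)))
                              (act (i, j, (?P - 1) - k, k) w)) {-M..M}"
  proof -
    have e: "l + (m - 1) + n + 1 = ?P - 1" by simp
    show ?thesis unfolding e by (rule SA_act[OF ij f1(1) Mb(3) Mb(2)])
  qed
  show "Y (act (i,j,m-1,n) one) l w =
           sc ((-1) ^ nat (- (m - 1) - n))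
             (Sum_any (\<lambda>k. sc (((of_int (l + n - k) :: complex) gchoose nat (- (m - 1) - 1))
                               * ((of_int (k - n - 1) :: complex) gchoose nat (- n - 1)))
                              (act (i, j, l + (m - 1) + n + 1 - k, k) w)))"
    unfolding Y1 B2 T V.scale_sum_right
  proof (rule sum.cong[OF refl])
    fix k
    have e: "?P - k - 1 = ?P - 1 - k" by simp
    show "sc (- 1 / of_int m) (sc ?s (sc (?c k) (sc (- of_int (?P - k)) (act (i,j,?P-k-1,k) w))))
       = sc ((-1) ^ nat (- (m - 1) - n)) (sc (((of_int (l + n - k) :: complex) gchoose nat (- (m - 1) - 1))
                               * ((of_int (k - n - 1) :: complex) gchoose nat (- n - 1)))
                              (act (i, j, (?P - 1) - k, k) w))"
      unfolding e V.scale_scale coef_m[OF mn, of l k, symmetric] by (simp add: mult.assoc)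
  qed
qed

lemma Phi_n:
  assumes ij: "1 \<le> i" "i \<le> d" "1 \<le> j" "j \<le> d" "i \<noteq> j"
    and mn: "m < 0" "n < 0" and IH: "Phi i j m n"
  shows "Phi i j m (n - 1)"
  unfolding Phi_def
proof (intro allI)
  fix l w
  let ?L = "Lop sc act j j (-1)"
  let ?om = "Lop sc act j j (-2) one"
  let ?x = "act (i,j,m,n) one"
  let ?s = "(-1::complex) ^ nat (- m - n)"
  let ?c = "\<lambda>k. ((of_int (l + n - k) :: complex) gchoose nat (- m - 1))
                               * ((of_int (k - n - 1) :: complex) gchoose nat (- n - 1))"
  let ?P = "l + m + n + 1"
  have Lh: "module_hom sc sc ?L" using L_hom ij by simp
  have yr: "in_range d (i,j,m,n)" using ij by (simp add: in_range_simp)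
  have Lx: "?L ?x = sc (- of_int n) (act (i,j,m,n-1) one)"
    using comm2[OF ij, of m n one] L_one[OF ij(3,4)] act_zero[OF yr] by simp
  have n0: "(of_int n :: complex) \<noteq> 0" using mn by simp
  have x': "act (i,j,m,n-1) one = sc (- 1 / of_int n) (?L ?x)"
    unfolding Lx using n0 by simp
  have Y1: "Y (act (i,j,m,n-1) one) l w = sc (- 1 / of_int n) (?L (Y ?x l w) - Y ?x l (?L w))"
    unfolding x' module_hom.scale[OF Y_hom_left] LY[OF ij(3,4)] borch0 ..
  obtain N1 where N1: "0 \<le> N1" "fs w N1" using fs_all by blast
  obtain N2 where N2: "0 \<le> N2" "fs (?L w) N2" using fs_all by blast
  define M where "M = N1 + N2 + \<bar>?P\<bar> + 2"
  have f1: "fs w (N1+N2)" "fs (?L w) (N1+N2)" using N1 N2 fs_mono by auto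
  have Mb: "N1 + N2 \<le> ?P - (-M)" "N1 + N2 \<le> M" "N1 + N2 \<le> (?P - 1) - (-M-1)" "N1 + N2 \<le> M - 1"
    unfolding M_def using N1 N2 by auto
  have A: "Y ?x l v = sc ?s (sum (\<lambda>k. sc (?c k) (act (i,j,?P-k,k) v)) {-M..M})"
    if "fs v (N1+N2)" for v
    using IH SA_act[OF ij that Mb(1,2), of ?c] unfolding Phi_def by simp
  have B: "?L (Y ?x l w) - Y ?x l (?L w)
      = sc ?s (sum (\<lambda>k. sc (?c k) (?L (act (i,j,?P-k,k) w) - act (i,j,?P-k,k) (?L w))) {-M..M})"
    unfolding A[OF f1(1)] A[OF f1(2)] module_hom.scale[OF Lh] module_hom.sum[OF Lh]
    by (simp add: V.scale_right_diff_distrib sum_subtractf)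
  also have "\<dots> = sc ?s (sum (\<lambda>k. sc (?c k) (sc (- of_int k) (act (i,j,?P-k,k-1) w))) {-M..M})"
    unfolding comm2[OF ij] ..
  also have "\<dots> = sc ?s (sum (\<lambda>k. sc (?c (k+1)) (sc (- of_int (k+1)) (act (i,j,?P-(k+1),k+1-1) w))) {-M-1..M-1})"
    by (subst sum_shift1) simp
  finally have B2: "?L (Y ?x l w) - Y ?x l (?L w) = \<dots>" .
  have T: "Sum_any (\<lambda>k. sc (((of_int (l + (n - 1) - k) :: complex) gchoose nat (- m - 1))
                               * ((of_int (k - (n - 1) - 1) :: complex) gchoose nat (- (n - 1) - 1)))
                              (act (i, j, l + m + (n - 1) + 1 - k, k) w))
     = sum (\<lambda>k. sc (((of_int (l + (n - 1) - k) :: complex) gchoose nat (- m - 1))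
                               * ((of_int (k - (n - 1) - 1) :: complex) gchoose nat (- (n - 1) - 1)))
                              (act (i, j, (?P - 1) - k, k) w)) {-M-1..M-1}"
  proof -
    have e: "l + m + (n - 1) + 1 = ?P - 1" by simp
    show ?thesis unfolding e by (rule SA_act[OF ij f1(1) Mb(3) Mb(4)])
  qed
  show "Y (act (i,j,m,n-1) one) l w =
           sc ((-1) ^ nat (- m - (n - 1)))
             (Sum_any (\<lambda>k. sc (((of_int (l + (n - 1) - k) :: complex) gchoose nat (- m - 1))
                               * ((of_int (k - (n - 1) - 1) :: complex) gchoose nat (- (n - 1) - 1)))
                              (act (i, j, l + m + (n - 1) + 1 - k, k) w)))"
    unfolding Y1 B2 T V.scale_sum_right
  proof (rule sum.cong[OF refl])
    fix k
    have e: "?P - (k + 1) = ?P - 1 - k" "k + 1 - 1 = k" by simp_all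
    show "sc (- 1 / of_int n) (sc ?s (sc (?c (k+1)) (sc (- of_int (k+1)) (act (i,j,?P-(k+1),k+1-1) w))))
       = sc ((-1) ^ nat (- m - (n - 1))) (sc (((of_int (l + (n - 1) - k) :: complex) gchoose nat (- m - 1))
                               * ((of_int (k - (n - 1) - 1) :: complex) gchoose nat (- (n - 1) - 1)))
                              (act (i, j, (?P - 1) - k, k) w))"
      unfolding e V.scale_scale coef_n[OF mn, of l k, symmetric] by (simp add: mult.assoc)
  qed
qed

lemma Phi_all:
  assumes ij: "1 \<le> i" "i \<le> d" "1 \<le> j" "j \<le> d" "i \<noteq> j"
    and mn: "m < 0" "n < 0"
  shows "Phi i j m n"
proof -
  have n1: "n \<le> -1" using mn by simp
  have P1: "Phi i j (-1) n" using n1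
  proof (induction n rule: int_le_induct)
    case base then show ?case using Phi_base[OF ij] .
  next
    case (step n) then show ?case using Phi_n[OF ij, of "-1" n] by simp
  qed
  have m1: "m \<le> -1" using mn by simp
  from m1 show ?thesis
  proof (induction m rule: int_le_induct)
    case base then show ?case using P1 .
  next
    case (step m) then show ?case using Phi_m[OF ij, of m n] mn by simp
  qed
qed

end

theorem lemma3p5:
  fixes d :: nat and r :: complex
    and sc :: "complex \<Rightarrow> 'v::ab_group_add \<Rightarrow> 'v"
    and act :: "gen \<Rightarrow> 'v \<Rightarrow> 'v" and one :: 'v
    and Y :: "'v \<Rightarrow> int \<Rightarrow> 'v \<Rightarrow> 'v"
    and i j :: nat and m n :: int
  assumes "d \<ge> 2"
    and "Mr_module d r sc act one"
    and "is_VOA sc Y one (\<Sum>k = 1..d. Lop sc act k k (-2) one) (of_nat d * r)"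
    and "\<forall>a b p. 1 \<le> a \<and> a \<le> d \<and> 1 \<le> b \<and> b \<le> d \<longrightarrow>
           Y (Lop sc act a b (-2) one) (p + 1) = Lop sc act a b p"
    and "1 \<le> i" "i \<le> d" "1 \<le> j" "j \<le> d" "i \<noteq> j" "m < 0" "n < 0"
  shows "\<forall>l w. Y (act (i,j,m,n) one) l w =
           sc ((-1) ^ nat (- m - n))
             (Sum_any (\<lambda>k. sc (((of_int (l + n - k) :: complex) gchoose nat (- m - 1))
                               * ((of_int (k - n - 1) :: complex) gchoose nat (- n - 1)))
                              (act (i, j, l + m + n + 1 - k, k) w)))"
proof -
  interpret VS d r sc act one Y using assms(2,3,4) by unfold_locales
  show ?thesis using Phi_all[OF assms(5-11)] unfolding Phi_def .
qed

end
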